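(* The function $k\mapsto T_1(k)$ is decreasing and the function $k\mapsto T_2(k)$ is increasing on $(k_0,\infty)$.
   Context: $I(u)=\tfrac12u\log u+\tfrac12(1-u)\log(1-u)$ on $[0,1]$ ($0\log0=0$). $k_0$ is the unique solution of $\frac{k_0-1}{k_0}\log(k_0-1)=1$. It is known that for every real $k>k_0$ there is a unique $\hat\theta(k)\geq0$ such that $u\mapsto\hat\theta(k)u^k-I(u)$ has exactly two global maximisers $u_1^*(\hat\theta(k),k)<u_2^*(\hat\theta(k),k)$ on $[0,1]$. Define $T_1(k)=u_1^*(\hat\theta(k),k)^k$ and $T_2(k)=u_2^*(\hat\theta(k),k)^k$. *)

theory Defs
  imports "HOL-Analysis.Analysis"
begin

definition I_fun :: "real \<Rightarrow> real" where
  "I_fun u = (if u = 0 then 0 else u * ln u) / 2 + (if u = 1 then 0 else (1 - u) * ln (1 - u)) / 2"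

definition k0 :: real where
  "k0 = (THE k. k > 1 \<and> (k - 1) / k * ln (k - 1) = 1)"

definition obj :: "real \<Rightarrow> real \<Rightarrow> real \<Rightarrow> real" where
  "obj \<theta> k u = \<theta> * u powr k - I_fun u"

definition maximisers :: "real \<Rightarrow> real \<Rightarrow> real set" where
  "maximisers \<theta> k = {u \<in> {0..1}. \<forall>v \<in> {0..1}. obj \<theta> k v \<le> obj \<theta> k u}"

definition theta_hat :: "real \<Rightarrow> real" where
  "theta_hat k = (THE \<theta>. \<theta> \<ge> 0 \<and> card (maximisers \<theta> k) = 2)"

definition u1_star :: "real \<Rightarrow> real \<Rightarrow> real" where
  "u1_star \<theta> k = Min (maximisers \<theta> k)"

definition u2_star :: "real \<Rightarrow> real \<Rightarrow> real" where
  "u2_star \<theta> k = Max (maximisers \<theta> k)"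

definition T1 :: "real \<Rightarrow> real" where
  "T1 k = u1_star (theta_hat k) k powr k"

definition T2 :: "real \<Rightarrow> real" where
  "T2 k = u2_star (theta_hat k) k powr k"

end

theory Submission
  imports Defs "HOL-Real_Asymp.Real_Asymp"
begin

definition Lf :: "real \<Rightarrow> real" where "Lf u = ln u - ln (1 - u)"

lemma I_eq: "0 < u \<Longrightarrow> u < 1 \<Longrightarrow> I_fun u = (u * ln u + (1 - u) * ln (1 - u)) / 2"
  by (simp add: I_fun_def add_divide_distrib)

lemma I_deriv:
  assumes "0 < u" "u < 1"
  shows "(I_fun has_real_derivative Lf u / 2) (at u)"
proof -
  have "((\<lambda>u. (u * ln u + (1 - u) * ln (1 - u)) / 2) has_real_derivative Lf u / 2) (at u)"
    using assms by (auto intro!: derivative_eq_intros simp: Lf_def divide_simps)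
  then show ?thesis
    by (rule has_field_derivative_transform_within_open[where S="{0<..<1}"])
       (use assms in \<open>auto simp: I_eq\<close>)
qed

lemma I_neg: "0 < u \<Longrightarrow> u < 1 \<Longrightarrow> I_fun u < 0"
  by (simp add: I_eq mult_pos_neg add_neg_neg)

lemma xlnx_ge: "0 \<le> x \<Longrightarrow> - (if x = 0 then 0 else x * ln x) \<le> 1 - (x::real)"
proof (cases "x = 0")
  case False
  assume "0 \<le> x"
  then have "x > 0" using False by simp
  have "ln (1/x) \<le> 1/x - 1" using \<open>x>0\<close> by (intro ln_le_minus_one) simp
  then have "- ln x \<le> 1/x - 1" using \<open>x>0\<close> by (simp add: ln_div)
  then have "x * (- ln x) \<le> x * (1/x - 1)" using \<open>x>0\<close> by (intro mult_left_mono) auto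
  also have "x * (1/x - 1) = 1 - x" using \<open>x>0\<close> by (simp add: right_diff_distrib)
  finally show ?thesis using False by simp
qed simp

lemma I_ge: "0 \<le> u \<Longrightarrow> u \<le> 1 \<Longrightarrow> - I_fun u \<le> 1/2"
  using xlnx_ge[of u] xlnx_ge[of "1-u"] unfolding I_fun_def by (auto simp: field_simps split: if_splits)

lemma xl_cont: "continuous_on {0..1} (\<lambda>x::real. if x = 0 then 0 else x * ln x)"
proof -
  have lim: "((\<lambda>x::real. x * ln x) \<longlongrightarrow> 0) (at_right 0)" by real_asymp
  show ?thesis
  proof (clarsimp simp: continuous_on_eq_continuous_within)
    fix x :: real assume x: "0 \<le> x" "x \<le> 1"
    show "continuous (at x within {0..1}) (\<lambda>x::real. if x = 0 then 0 else x * ln x)"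
    proof (cases "x = 0")
      case True
      have "((\<lambda>x::real. if x = 0 then 0 else x * ln x) \<longlongrightarrow> 0) (at_right 0)"
        using lim by (rule Lim_transform_eventually) (auto simp: eventually_at_right_field intro: exI[of _ 1])
      then have "((\<lambda>x::real. if x = 0 then 0 else x * ln x) \<longlongrightarrow> 0) (at 0 within {0..1})"
        by (simp add: at_within_Icc_at_right)
      then show ?thesis using True by (simp add: continuous_within)
    next
      case False
      then have "x > 0" using x by simp
      have "isCont (\<lambda>x::real. x * ln x) x" using \<open>x>0\<close> by (auto intro!: continuous_intros)
      have ev: "eventually (\<lambda>y. (if y = 0 then 0 else y * ln y) = y * ln (y::real)) (nhds x)"
        using t1_space_nhds[of x 0] False by (auto elim: eventually_mono)
      have "isCont (\<lambda>x::real. if x = 0 then 0 else x * ln x) x"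
        using isCont_cong[OF ev] \<open>isCont (\<lambda>x::real. x * ln x) x\<close> by simp
      then show ?thesis by (rule continuous_at_imp_continuous_within)
    qed
  qed
qed


lemma I_cont: "continuous_on {0..1} I_fun"
proof -
  let ?xl = "\<lambda>x::real. if x = 0 then 0 else x * ln x"
  have eq: "I_fun = (\<lambda>u. ?xl u / 2 + ?xl (1 - u) / 2)"
    by (rule ext) (simp add: I_fun_def)
  have c2: "continuous_on {0..1} (\<lambda>u. ?xl (1 - u))"
    by (rule continuous_on_compose2[OF xl_cont]) (auto intro!: continuous_intros)
  show ?thesis unfolding eq
    by (intro continuous_on_add continuous_on_divide xl_cont c2 continuous_on_const) auto
qed

lemma I_zero [simp]: "I_fun 0 = 0" and I_one [simp]: "I_fun 1 = 0"
  by (simp_all add: I_fun_def)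

lemma obj_cont: "0 < k \<Longrightarrow> continuous_on {0..1} (obj \<theta> k)"
proof -
  assume k: "0 < k"
  have "continuous_on {0..1} (\<lambda>u::real. u powr k)"
    by (rule continuous_on_powr'[OF continuous_on_id continuous_on_const]) (use k in auto)
  then show ?thesis unfolding obj_def[abs_def]
    by (intro continuous_on_diff continuous_on_mult continuous_on_const I_cont)
qed

lemma obj_deriv:
  assumes "0 < u" "u < 1"
  shows "(obj \<theta> k has_real_derivative (\<theta> * (k * u powr (k - 1)) - Lf u / 2)) (at u)"
proof -
  have "((\<lambda>u. \<theta> * u powr k - I_fun u) has_real_derivative (\<theta> * (k * u powr (k - 1)) - Lf u / 2)) (at u)"
    by (intro DERIV_diff DERIV_cmult has_real_derivative_powr I_deriv) (use assms in auto)
  then show ?thesis by (simp add: obj_def[abs_def])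
qed

lemma deriv_cont:
  assumes "\<And>x. a \<le> x \<Longrightarrow> x \<le> b \<Longrightarrow> (f has_real_derivative f' x) (at x)"
  shows "continuous_on {a..b} f"
  using assms DERIV_isCont by (intro continuous_at_imp_continuous_on) fastforce

lemma Lf_deriv: "0 < u \<Longrightarrow> u < 1 \<Longrightarrow> (Lf has_real_derivative (1/u + 1/(1-u))) (at u)"
  unfolding Lf_def[abs_def]
  by (auto intro!: derivative_eq_intros simp: field_simps)

definition phi :: "real \<Rightarrow> real \<Rightarrow> real" where
  "phi k u = 1/(1-u) - (k-1) * Lf u"

definition hf :: "real \<Rightarrow> real \<Rightarrow> real" where
  "hf k u = Lf u * u powr (1 - k) / (2*k)"

lemma phi_deriv_alg:
  fixes u e k :: real
  assumes "0 < u" "0 < e" "u + e = 1"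
  shows "1/e^2 - (k-1)*(1/u + 1/e) = (k*u - (k-1)) / (u * e^2)"
proof -
  have "1/u + 1/e = (u + e)/(u*e)" using assms(1,2) by (simp add: field_simps add.commute)
  then have "1/u + 1/e = 1/(u*e)" using assms(3) by simp
  then have "1/e^2 - (k-1)*(1/u + 1/e) = 1/e^2 - (k-1)/(u*e)" by simp
  also have "\<dots> = (u - (k-1)*e) / (u*e^2)" using assms by (simp add: field_simps power2_eq_square)
  also have "u - (k-1)*e = k*u - (k-1)"
  proof -
    have e: "e = 1 - u" using assms(3) by linarith
    show ?thesis unfolding e by (simp add: algebra_simps)
  qed
  finally show ?thesis .
qed

lemma phi_deriv: "0 < u \<Longrightarrow> u < 1 \<Longrightarrow>
   (phi k has_real_derivative (k*u - (k-1)) / (u * (1-u)^2)) (at u)"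
proof -
  assume u: "0 < u" "u < 1"
  have d1: "((\<lambda>u. 1/(1-u)) has_real_derivative 1/(1-u)^2) (at u)"
    using u by (auto intro!: derivative_eq_intros simp: power2_eq_square divide_simps)
  have "((\<lambda>u. 1/(1-u) - (k-1) * Lf u) has_real_derivative (1/(1-u)^2 - (k-1)*(1/u + 1/(1-u)))) (at u)"
    by (intro DERIV_diff DERIV_cmult d1 Lf_deriv u)
  moreover have "1/(1-u)^2 - (k-1)*(1/u + 1/(1-u)) = (k*u - (k-1)) / (u * (1-u)^2)"
    using phi_deriv_alg[of u "1-u" k] u by simp
  ultimately show ?thesis by (simp add: phi_def[abs_def])
qed

lemma hf_deriv: "0 < u \<Longrightarrow> u < 1 \<Longrightarrow> 0 < k \<Longrightarrow>
   (hf k has_real_derivative phi k u * u powr (-k) / (2*k)) (at u)"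
proof -
  assume u: "0 < u" "u < 1" and k: "0 < k"
  have "((\<lambda>u. Lf u * u powr (1 - k)) has_real_derivative
        (1/u + 1/(1-u)) * u powr (1-k) + ((1-k) * u powr (1-k-1)) * Lf u) (at u)"
    by (intro DERIV_mult Lf_deriv has_real_derivative_powr) (use u in auto)
  then have der: "((\<lambda>u. Lf u * u powr (1 - k) / (2*k)) has_real_derivative
        ((1/u + 1/(1-u)) * u powr (1-k) + Lf u * ((1-k) * u powr (1-k-1))) / (2*k)) (at u)"
    by (intro DERIV_cdivide) (simp add: mult.commute)
  have eq: "((1/u + 1/(1-u)) * u powr (1-k) + Lf u * ((1-k) * u powr (1-k-1))) / (2*k)
      = phi k u * u powr (-k) / (2*k)"
  proof -
    have "u powr (1 + (-k)) = u powr 1 * u powr (-k)" by (rule powr_add)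
    then have p1: "u powr (1-k) = u * u powr (-k)" using u by simp
    have p2: "u powr (1-k-1) = u powr (-k)" by simp
    have h: "(1/u + 1/(1-u)) * u = 1/(1-u)" using u by (simp add: field_simps)
    have "(1/u + 1/(1-u)) * (u * u powr (-k)) + Lf u * ((1-k) * u powr (-k))
        = ((1/u + 1/(1-u)) * u + (1-k) * Lf u) * u powr (-k)" by (simp add: algebra_simps)
    also have "\<dots> = phi k u * u powr (-k)" unfolding h phi_def by (simp add: algebra_simps)
    finally show ?thesis unfolding p1 p2 by simp
  qed
  show ?thesis using der[unfolded eq] unfolding hf_def[abs_def] .
qed

lemma obj_deriv_hf:
  assumes "0 < u" "u < 1" "0 < k"
  shows "\<theta> * (k * u powr (k - 1)) - Lf u / 2 = k * u powr (k-1) * (\<theta> - hf k u)"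
proof -
  have "u powr (k-1) * u powr (1-k) = 1" using assms by (simp add: powr_add[symmetric])
  then show ?thesis unfolding hf_def using assms by (simp add: field_simps)
qed


definition gk :: "real \<Rightarrow> real" where "gk k = (k-1)/k * ln (k-1)"

lemma gk_strict: assumes "2 \<le> x" "x < y" shows "gk x < gk y"
proof (cases "x = 2")
  case True
  have "0 < (y-1)/y" "0 < ln (y-1)" using assms by auto
  then have "0 < (y-1)/y * ln (y-1)" by (rule mult_pos_pos)
  then show ?thesis using True by (simp add: gk_def)
next
  case False
  then have x2: "2 < x" using assms by simp
  have "(x-1)/x < (y-1)/y" using x2 assms by (simp add: field_simps)
  moreover have "ln (x-1) < ln (y-1)" using x2 assms by simp
  moreover have "0 < ln (x-1)" "0 < (x-1)/x" using x2 by auto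
  ultimately show ?thesis unfolding gk_def by (intro mult_strict_mono) auto
qed

lemma k0_props: "2 < k0" "\<And>k. k0 < k \<Longrightarrow> k - (k-1) * ln (k-1) < 0"
proof -
  have cont: "continuous_on {2..exp 2 + 1} gk"
    unfolding gk_def[abs_def] by (auto intro!: continuous_intros)
  have g2: "gk 2 = 0" by (simp add: gk_def)
  have "exp (2::real) \<ge> 1" by simp
  then have "exp 2 + 1 \<le> 2 * exp (2::real)" by simp
  moreover have "gk (exp 2 + 1) = 2 * exp 2 / (exp 2 + 1)" by (simp add: gk_def)
  ultimately have ge: "1 \<le> gk (exp 2 + 1)" by (simp add: le_divide_eq_1_pos add_pos_pos)
  obtain r where r: "2 \<le> r" "r \<le> exp 2 + 1" "gk r = 1"
    using IVT'[of gk 2 1 "exp 2 + 1", OF _ ge _ cont] g2 by auto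
  have r2: "2 < r" using r g2 by (cases "r = 2") auto
  have uniq: "k = r" if "k > 1 \<and> (k - 1) / k * ln (k - 1) = 1" for k
  proof -
    have gk1: "gk k = 1" using that by (simp add: gk_def)
    have "k > 2"
    proof (rule ccontr)
      assume "\<not> k > 2"
      then have "ln (k-1) \<le> 0" using that by simp
      moreover have "0 \<le> (k-1)/k" using that by simp
      ultimately have "(k-1)/k * ln (k-1) \<le> 0" by (rule mult_nonneg_nonpos[rotated])
      then have "gk k \<le> 0" unfolding gk_def .
      then show False using gk1 by simp
    qed
    show ?thesis
    proof (rule ccontr)
      assume "k \<noteq> r"
      then consider "k < r" | "r < k" by linarith
      then show False
      proof cases
        case 1 then show False using gk_strict[of k r] \<open>k>2\<close> gk1 r by simp
      next
        case 2 then show False using gk_strict[of r k] r2 gk1 r by simp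
      qed
    qed
  qed
  have k0r: "k0 = r"
    unfolding k0_def
  proof (rule the_equality)
    show "r > 1 \<and> (r - 1) / r * ln (r - 1) = 1" using r r2 by (simp add: gk_def)
  qed (use uniq in blast)
  show "2 < k0" using k0r r2 by simp
  fix k assume "k0 < k"
  then have "gk r < gk k" using gk_strict[of r k] r k0r by simp
  then have "1 < (k-1)/k * ln (k-1)" using r by (simp add: gk_def)
  moreover have "k > 0" using \<open>k0 < k\<close> k0r r2 by simp
  ultimately show "k - (k-1) * ln (k-1) < 0" by (simp add: field_simps)
qed

section \<open>phi analysis\<close>

lemma phi_cont: "0 < x \<Longrightarrow> y < 1 \<Longrightarrow> continuous_on {x..y} (phi k)"
  by (rule deriv_cont[OF phi_deriv]) auto

lemma phi_dec: assumes "0 < x" "x < y" "y \<le> (k-1)/k" "0 < k" shows "phi k y < phi k x"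
proof (rule DERIV_neg_imp_decreasing_open[OF \<open>x<y\<close>])
  have "(k-1)/k < 1" using assms by simp
  then have y1: "y < 1" using assms by linarith
  show "continuous_on {x..y} (phi k)" using phi_cont assms y1 by simp
  fix \<xi> assume \<xi>: "x < \<xi>" "\<xi> < y"
  have "k*y \<le> k-1" using assms by (simp add: pos_le_divide_eq mult.commute)
  moreover have "k*\<xi> < k*y" using \<xi> assms by simp
  ultimately have "k*\<xi> - (k-1) < 0" by simp
  moreover have "0 < \<xi> * (1-\<xi>)^2" using \<xi> assms y1 by simp
  ultimately show "\<exists>d. (phi k has_real_derivative d) (at \<xi>) \<and> d < 0"
    using phi_deriv[of \<xi> k] \<xi> assms y1 by (intro exI[of _ "(k*\<xi> - (k-1)) / (\<xi> * (1-\<xi>)^2)"]) (auto simp: divide_neg_pos)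
qed

lemma phi_inc: assumes "(k-1)/k \<le> x" "x < y" "y < 1" "0 < k" "1 < k" shows "phi k x < phi k y"
proof (rule DERIV_pos_imp_increasing_open[OF \<open>x<y\<close>])
  have x0: "0 < x" using assms by (smt (verit) divide_pos_pos)
  show "continuous_on {x..y} (phi k)" using phi_cont assms x0 by simp
  fix \<xi> assume \<xi>: "x < \<xi>" "\<xi> < y"
  have "k-1 \<le> k*x" using assms by (simp add: pos_divide_le_eq mult.commute)
  moreover have "k*x < k*\<xi>" using \<xi> assms by simp
  ultimately have "k*\<xi> - (k-1) > 0" by simp
  moreover have "0 < \<xi> * (1-\<xi>)^2" using \<xi> assms x0 by simp
  ultimately show "\<exists>d. (phi k has_real_derivative d) (at \<xi>) \<and> d > 0"
    using phi_deriv[of \<xi> k] \<xi> assms x0 by (intro exI[of _ "(k*\<xi> - (k-1)) / (\<xi> * (1-\<xi>)^2)"]) auto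
qed

lemma phi_c: "1 < k \<Longrightarrow> phi k ((k-1)/k) = k - (k-1) * ln (k-1)"
proof -
  assume k: "1 < k"
  have "1 - (k-1)/k = 1/k" using k by (simp add: field_simps)
  moreover have "ln ((k-1)/k) - ln (1/k) = ln (k-1)" using k by (simp add: ln_div)
  ultimately show ?thesis by (simp add: phi_def Lf_def)
qed

lemma phi_half: "phi k (1/2) = 2"
  by (simp add: phi_def Lf_def)

lemma phi_ur: assumes "2 < k" shows "0 < phi k (1 - 1/(4*k^2))"
proof -
  let ?ur = "1 - 1/(4*k^2)"
  have k2: "0 < 4*k^2" using assms by simp
  have kk: "2*2 < k*k" using assms by (intro mult_strict_mono) auto
  have ur0: "0 < ?ur" "?ur < 1" using assms kk by (auto simp: field_simps power2_eq_square) 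
  have "ln ?ur < 0" using ur0 by simp
  then have "Lf ?ur \<le> - ln (1/(4*k^2))" by (simp add: Lf_def)
  also have "\<dots> = ln (4*k^2)" using assms by (simp add: ln_div)
  also have "\<dots> = ln (2*k) + ln (2*k)"
  proof -
    have "4*k^2 = (2*k)*(2*k)" by (simp add: power2_eq_square)
    then show ?thesis using assms ln_mult_pos[of "2*k" "2*k"] by simp
  qed
  also have "\<dots> \<le> 2*(2*k-1)" using ln_le_minus_one[of "2*k"] assms by simp
  finally have L: "Lf ?ur \<le> 2*(2*k-1)" .
  have "phi k ?ur = 4*k^2 - (k-1) * Lf ?ur" by (simp add: phi_def)
  moreover have "(k-1) * Lf ?ur \<le> (k-1) * (2*(2*k-1))" using L assms by (intro mult_left_mono) auto
  moreover have "(k-1) * (2*(2*k-1)) = 4*k^2 - 6*k + 2" by (simp add: algebra_simps power2_eq_square)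
  ultimately show ?thesis using assms by linarith
qed

lemma phi_roots:
  assumes k2: "2 < k" and neg: "k - (k-1) * ln (k-1) < 0"
  shows "\<exists>a b. 1/2 < a \<and> a < (k-1)/k \<and> (k-1)/k < b \<and> b < 1 \<and> phi k a = 0 \<and> phi k b = 0 \<and>
     (\<forall>x. 0 < x \<and> x < a \<longrightarrow> 0 < phi k x) \<and> (\<forall>x. a < x \<and> x < b \<longrightarrow> phi k x < 0) \<and>
     (\<forall>x. b < x \<and> x < 1 \<longrightarrow> 0 < phi k x)"
proof -
  let ?c = "(k-1)/k" and ?ur = "1 - 1/(4*k^2)"
  have c_half: "1/2 < ?c" using k2 by (simp add: field_simps)
  have c1: "?c < 1" using k2 by simp
  have "2*2 < k*k" using k2 by (intro mult_strict_mono) auto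
  then have cur: "?c < ?ur" using k2 by (simp add: field_simps power2_eq_square)
  have ur1: "?ur < 1" using k2 by simp
  have pc: "phi k ?c < 0" using phi_c[of k] k2 neg by simp
  obtain a where a: "1/2 \<le> a" "a \<le> ?c" "phi k a = 0"
    using IVT2'[of "phi k" ?c 0 "1/2", OF _ _ _ phi_cont] pc phi_half c_half c1 by force
  obtain b where b: "?c \<le> b" "b \<le> ?ur" "phi k b = 0"
    using IVT'[of "phi k" ?c 0 ?ur, OF _ _ _ phi_cont] pc phi_ur[OF k2] cur ur1 c_half by force
  have a1: "a \<noteq> 1/2" "a \<noteq> ?c"
  proof -
    show "a \<noteq> 1/2" proof assume "a = 1/2" then have "phi k a = 2" using phi_half[of k] by (simp only:)
      with a show False by simp qed
    show "a \<noteq> ?c" using a pc by auto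
  qed
  have b1: "b \<noteq> ?c" using b pc by auto
  show ?thesis
  proof (intro exI conjI allI impI)
    show "1/2 < a" using a(1) a1(1) by linarith
    show "a < ?c" using a(2) a1(2) by linarith
    show "?c < b" using b(1) b1 by linarith
    show "b < 1" using b(2) ur1 by linarith
    show "phi k a = 0" "phi k b = 0" using a(3) b(3) by auto
    fix x
    have k0: "0 < k" "1 < k" using k2 by auto
    { assume x: "0 < x \<and> x < a"
      have "phi k a < phi k x" by (rule phi_dec) (use x a k0 in auto)
      then show "0 < phi k x" using a(3) by simp }
    { assume x: "a < x \<and> x < b"
      show "phi k x < 0"
      proof (cases "x \<le> ?c")
        case True
        have "0 < a" using a(1) by linarith
        then have "phi k x < phi k a" by (intro phi_dec) (use x True k0 in auto)
        then show ?thesis using a(3) by simp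
      next
        case False
        have "b < 1" using b(2) ur1 by linarith
        then have "phi k x < phi k b" by (intro phi_inc) (use x False k0 in auto)
        then show ?thesis using b(3) by simp
      qed }
    { assume x: "b < x \<and> x < 1"
      have "phi k b < phi k x" by (rule phi_inc) (use x b k0 in auto)
      then show "0 < phi k x" using b(3) by simp }
  qed
qed

section \<open>Structure of maximisers\<close>

lemma hf_cont: "0 < x \<Longrightarrow> y < 1 \<Longrightarrow> 0 < k \<Longrightarrow> continuous_on {x..y} (hf k)"
  by (rule deriv_cont[OF hf_deriv]) auto

lemma hf_inc_gen:
  assumes "0 < x" "x < y" "y < 1" "0 < k" "\<And>\<xi>. x < \<xi> \<Longrightarrow> \<xi> < y \<Longrightarrow> 0 < phi k \<xi>"
  shows "hf k x < hf k y"
proof (rule DERIV_pos_imp_increasing_open[OF \<open>x<y\<close>])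
  show "continuous_on {x..y} (hf k)" using hf_cont assms by simp
  fix \<xi> assume \<xi>: "x < \<xi>" "\<xi> < y"
  have "0 < phi k \<xi> * \<xi> powr (-k) / (2*k)" using assms \<xi> by simp
  then show "\<exists>d. (hf k has_real_derivative d) (at \<xi>) \<and> 0 < d"
    using hf_deriv[of \<xi> k] \<xi> assms by auto
qed

lemma hf_dec_gen:
  assumes "0 < x" "x < y" "y < 1" "0 < k" "\<And>\<xi>. x < \<xi> \<Longrightarrow> \<xi> < y \<Longrightarrow> phi k \<xi> < 0"
  shows "hf k y < hf k x"
proof (rule DERIV_neg_imp_decreasing_open[OF \<open>x<y\<close>])
  show "continuous_on {x..y} (hf k)" using hf_cont assms by simp
  fix \<xi> assume \<xi>: "x < \<xi>" "\<xi> < y"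
  have "phi k \<xi> * \<xi> powr (-k) < 0" using assms \<xi> by (simp add: mult_neg_pos)
  then have "phi k \<xi> * \<xi> powr (-k) / (2*k) < 0" using assms by (simp add: divide_neg_pos)
  then show "\<exists>d. (hf k has_real_derivative d) (at \<xi>) \<and> d < 0"
    using hf_deriv[of \<xi> k] \<xi> assms by auto
qed

lemma Lf_mono: "0 < x \<Longrightarrow> x < y \<Longrightarrow> y < 1 \<Longrightarrow> Lf x < Lf y"
  unfolding Lf_def by (smt (verit) ln_less_cancel_iff)

lemma Lf_nonneg_iff: "0 < x \<Longrightarrow> x < 1 \<Longrightarrow> 0 \<le> Lf x \<longleftrightarrow> 1/2 \<le> x"
  unfolding Lf_def by (auto simp: field_simps)

lemma Lf_pos: "1/2 < x \<Longrightarrow> x < 1 \<Longrightarrow> 0 < Lf x"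
  unfolding Lf_def by (auto simp: field_simps)

locale kfix =
  fixes k a b :: real
  assumes k2: "2 < k" and a_half: "1/2 < a" and ac: "a < (k-1)/k" and cb: "(k-1)/k < b"
    and b1: "b < 1" and phi_a: "phi k a = 0" and phi_b: "phi k b = 0"
    and phi_pos1: "\<And>x. 0 < x \<Longrightarrow> x < a \<Longrightarrow> 0 < phi k x"
    and phi_neg: "\<And>x. a < x \<Longrightarrow> x < b \<Longrightarrow> phi k x < 0"
    and phi_pos2: "\<And>x. b < x \<Longrightarrow> x < 1 \<Longrightarrow> 0 < phi k x"
begin

lemma k0': "0 < k" using k2 by simp
lemma ab: "a < b" using ac cb by simp

lemma hf_inc1: "0 < x \<Longrightarrow> x < y \<Longrightarrow> y \<le> a \<Longrightarrow> hf k x < hf k y"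
  by (rule hf_inc_gen) (use ab b1 k0' phi_pos1 in auto)

lemma hf_dec: "a \<le> x \<Longrightarrow> x < y \<Longrightarrow> y \<le> b \<Longrightarrow> hf k y < hf k x"
  by (rule hf_dec_gen) (use a_half b1 k0' phi_neg in auto)

lemma hf_inc2: "b \<le> x \<Longrightarrow> x < y \<Longrightarrow> y < 1 \<Longrightarrow> hf k x < hf k y"
  by (rule hf_inc_gen) (use a_half ab k0' phi_pos2 in auto)

lemma obj_cont_k: "continuous_on S (obj \<theta> k)" if "S \<subseteq> {0..1}"
  using continuous_on_subset[OF obj_cont[OF k0'] that] .

lemma max_in01:
  assumes th: "0 \<le> \<theta>" and u: "u \<in> maximisers \<theta> k"
  shows "0 < u \<and> u < 1"
proof -
  have u01: "0 \<le> u" "u \<le> 1" and ule: "\<And>v. 0 \<le> v \<Longrightarrow> v \<le> 1 \<Longrightarrow> obj \<theta> k v \<le> obj \<theta> k u"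
    using u by (auto simp: maximisers_def)
  have "u \<noteq> 0"
  proof
    assume "u = 0"
    have o0: "obj \<theta> k 0 = 0" by (simp add: obj_def)
    have "0 \<le> \<theta> * (1/2) powr k" using th by simp
    moreover have "I_fun (1/2) < 0" by (rule I_neg) auto
    ultimately have "0 < obj \<theta> k (1/2)" by (simp add: obj_def)
    moreover have "obj \<theta> k (1/2) \<le> obj \<theta> k 0" using ule[of "1/2"] \<open>u = 0\<close> by simp
    ultimately show False using o0 by simp
  qed
  moreover have "u \<noteq> 1"
  proof
    assume "u = 1"
    define E where "E = exp (2*\<theta>*k)"
    define u0 where "u0 = E / (1 + E)"
    have E0: "0 < E" by (simp add: E_def)
    have u0: "0 < u0" "u0 < 1" using E0 by (auto simp: u0_def field_simps)
    have "1 - u0 = 1 / (1 + E)" using E0 by (simp add: u0_def field_simps)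
    then have "Lf u0 = ln E" using E0 by (simp add: Lf_def u0_def ln_div)
    then have Lu0: "Lf u0 = 2*\<theta>*k" by (simp add: E_def)
    have "obj \<theta> k 1 < obj \<theta> k u0"
    proof (rule DERIV_neg_imp_decreasing_open[OF \<open>u0 < 1\<close>])
      show "continuous_on {u0..1} (obj \<theta> k)" by (rule obj_cont_k) (use u0 in auto)
      fix \<xi> assume \<xi>: "u0 < \<xi>" "\<xi> < 1"
      have "\<xi> powr (k-1) \<le> 1" using \<xi> u0 k2 by (intro powr_le1) auto
      then have "k * \<xi> powr (k - 1) \<le> k * 1" using k0' by (intro mult_left_mono) auto
      then have "\<theta> * (k * \<xi> powr (k - 1)) \<le> \<theta> * k" using th by (simp add: mult_left_mono)
      moreover have "Lf u0 < Lf \<xi>" using Lf_mono[of u0 \<xi>] \<xi> u0 by simp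
      ultimately have "\<theta> * (k * \<xi> powr (k - 1)) - Lf \<xi> / 2 < 0" using Lu0 by simp
      then show "\<exists>d. (obj \<theta> k has_real_derivative d) (at \<xi>) \<and> d < 0"
        using obj_deriv[of \<xi> \<theta> k] \<xi> u0 by auto
    qed
    moreover have "obj \<theta> k u0 \<le> obj \<theta> k 1" using ule[of u0] u0 \<open>u = 1\<close> by simp
    ultimately show False by simp
  qed
  ultimately show ?thesis using u01 by simp
qed

lemma max_le: "u \<in> maximisers \<theta> k \<Longrightarrow> 0 \<le> v \<Longrightarrow> v \<le> 1 \<Longrightarrow> obj \<theta> k v \<le> obj \<theta> k u"
  by (auto simp: maximisers_def)

lemma max_crit:
  assumes th: "0 \<le> \<theta>" and u: "u \<in> maximisers \<theta> k"
  shows "hf k u = \<theta>"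
proof -
  have u01: "0 < u" "u < 1" using max_in01[OF th u] by auto
  have "\<theta> * (k * u powr (k - 1)) - Lf u / 2 = 0"
  proof (rule DERIV_local_max[OF obj_deriv[OF u01]])
    show "0 < min u (1-u)" using u01 by simp
    show "\<forall>y. \<bar>u - y\<bar> < min u (1 - u) \<longrightarrow> obj \<theta> k y \<le> obj \<theta> k u"
      using max_le[OF u] by auto
  qed
  then have "k * u powr (k-1) * (\<theta> - hf k u) = 0" using obj_deriv_hf[OF u01 k0'] by simp
  moreover have "k * u powr (k-1) \<noteq> 0" using u01 k0' by simp
  ultimately show ?thesis by simp
qed

lemma max_half:
  assumes th: "0 \<le> \<theta>" and u: "u \<in> maximisers \<theta> k"
  shows "1/2 \<le> u"
proof -
  have u01: "0 < u" "u < 1" using max_in01[OF th u] by auto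
  have "0 \<le> hf k u" using max_crit[OF th u] th by simp
  then have "0 \<le> Lf u * u powr (1 - k)" using k0' unfolding hf_def by (simp add: zero_le_divide_iff)
  then have "0 \<le> Lf u" using u01 by (simp add: zero_le_mult_iff)
  then show ?thesis using Lf_nonneg_iff u01 by simp
qed

lemma max_pieces:
  assumes th: "0 \<le> \<theta>" and u: "u \<in> maximisers \<theta> k"
  shows "u < a \<or> b \<le> u"
proof (rule ccontr)
  assume "\<not> (u < a \<or> b \<le> u)"
  then have ua: "a \<le> u" "u < b" by auto
  have u01: "0 < u" "u < 1" using max_in01[OF th u] by auto
  have hu: "hf k u = \<theta>" using max_crit[OF th u] .
  have "obj \<theta> k u < obj \<theta> k b"
  proof (rule DERIV_pos_imp_increasing_open[OF \<open>u < b\<close>])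
    show "continuous_on {u..b} (obj \<theta> k)" by (rule obj_cont_k) (use u01 b1 in auto)
    fix \<xi> assume \<xi>: "u < \<xi>" "\<xi> < b"
    have "hf k \<xi> < hf k u" using hf_dec[of u \<xi>] ua \<xi> by simp
    moreover have "0 < k * \<xi> powr (k-1)" using \<xi> u01 k0' by simp
    ultimately have "0 < k * \<xi> powr (k-1) * (\<theta> - hf k \<xi>)" using hu by simp
    then show "\<exists>d. (obj \<theta> k has_real_derivative d) (at \<xi>) \<and> 0 < d"
      using obj_deriv[of \<xi> \<theta> k] obj_deriv_hf[of \<xi> k \<theta>] \<xi> u01 b1 k0' by auto
  qed
  moreover have "obj \<theta> k b \<le> obj \<theta> k u" using max_le[OF u, of b] a_half ab b1 by simp
  ultimately show False by simp
qed

lemma max_mono: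
  assumes th: "0 \<le> \<theta>" and lt: "\<theta> < \<theta>'" and u: "u \<in> maximisers \<theta> k" and v: "v \<in> maximisers \<theta>' k"
  shows "u < v"
proof -
  have th': "0 \<le> \<theta>'" using th lt by simp
  have u01: "0 < u" "u < 1" using max_in01[OF th u] by auto
  have v01: "0 < v" "v < 1" using max_in01[OF th' v] by auto
  have 1: "obj \<theta> k v \<le> obj \<theta> k u" using max_le[OF u] v01 by simp
  have 2: "obj \<theta>' k u \<le> obj \<theta>' k v" using max_le[OF v] u01 by simp
  have "(\<theta>' - \<theta>) * (v powr k - u powr k) \<ge> 0" using 1 2 by (simp add: obj_def algebra_simps)
  then have "u powr k \<le> v powr k" using lt by (simp add: zero_le_mult_iff)
  then have "u \<le> v"
  proof (rule contrapos_pp)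
    assume "\<not> u \<le> v"
    then have "v powr k < u powr k" using powr_less_mono2[of k v u] v01 k0' by simp
    then show "\<not> u powr k \<le> v powr k" by simp
  qed
  moreover have "u \<noteq> v" using max_crit[OF th u] max_crit[OF th' v] lt by auto
  ultimately show ?thesis by simp
qed

lemma max_uniq_left:
  assumes th: "0 \<le> \<theta>" and u: "u \<in> maximisers \<theta> k" and v: "v \<in> maximisers \<theta> k"
    and "u < a" "v < a"
  shows "u = v"
proof (rule ccontr)
  assume "u \<noteq> v"
  have u01: "0 < u" using max_in01[OF th u] by auto
  have v01: "0 < v" using max_in01[OF th v] by auto
  have "hf k u = hf k v" using max_crit[OF th u] max_crit[OF th v] by simp
  moreover have "hf k u < hf k v \<or> hf k v < hf k u"
    using \<open>u \<noteq> v\<close> hf_inc1[of u v] hf_inc1[of v u] u01 v01 assms(4,5) by (cases "u < v") auto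
  ultimately show False by simp
qed

lemma max_uniq_right:
  assumes th: "0 \<le> \<theta>" and u: "u \<in> maximisers \<theta> k" and v: "v \<in> maximisers \<theta> k"
    and "b \<le> u" "b \<le> v"
  shows "u = v"
proof (rule ccontr)
  assume "u \<noteq> v"
  have u01: "u < 1" using max_in01[OF th u] by auto
  have v01: "v < 1" using max_in01[OF th v] by auto
  have "hf k u = hf k v" using max_crit[OF th u] max_crit[OF th v] by simp
  moreover have "hf k u < hf k v \<or> hf k v < hf k u"
    using \<open>u \<noteq> v\<close> hf_inc2[of u v] hf_inc2[of v u] u01 v01 assms(4,5) by (cases "u < v") auto
  ultimately show False by simp
qed

end

context kfix begin

definition V :: "real set \<Rightarrow> real \<Rightarrow> real" where
  "V S \<theta> = Sup (obj \<theta> k ` S)"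

lemma V_attain:
  assumes "compact S" "S \<noteq> {}" "S \<subseteq> {0..1}"
  shows "\<exists>x\<in>S. (\<forall>y\<in>S. obj \<theta> k y \<le> obj \<theta> k x) \<and> V S \<theta> = obj \<theta> k x"
proof -
  obtain x where x: "x \<in> S" "\<forall>y\<in>S. obj \<theta> k y \<le> obj \<theta> k x"
    using continuous_attains_sup[OF assms(1,2) obj_cont_k[OF assms(3)]] by blast
  have "V S \<theta> = obj \<theta> k x" unfolding V_def
    by (rule cSup_eq_maximum) (use x in auto)
  then show ?thesis using x by blast
qed

lemma V_lip:
  assumes "compact S" "S \<noteq> {}" "S \<subseteq> {0..1}"
  shows "\<bar>V S \<theta> - V S \<theta>'\<bar> \<le> \<bar>\<theta> - \<theta>'\<bar>"
proof -
  have key: "V S t - V S t' \<le> \<bar>t - t'\<bar>" for t t'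
  proof -
    obtain x where x: "x \<in> S" "\<forall>y\<in>S. obj t k y \<le> obj t k x" "V S t = obj t k x"
      using V_attain[OF assms, of t] by blast
    obtain x' where x': "x' \<in> S" "\<forall>y\<in>S. obj t' k y \<le> obj t' k x'" "V S t' = obj t' k x'"
      using V_attain[OF assms, of t'] by blast
    have x01: "0 \<le> x" "x \<le> 1" using x(1) assms(3) by auto
    have p: "0 \<le> x powr k" "x powr k \<le> 1" using x01 k0' by (auto intro: powr_le1)
    have "obj t k x = obj t' k x + (t - t') * x powr k" by (simp add: obj_def algebra_simps)
    also have "(t - t') * x powr k \<le> \<bar>t - t'\<bar>"
    proof -
      have "(t - t') * x powr k \<le> \<bar>(t - t') * x powr k\<bar>" by simp
      also have "\<dots> = \<bar>t - t'\<bar> * x powr k" using p by (simp add: abs_mult)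
      also have "\<dots> \<le> \<bar>t - t'\<bar> * 1" using p by (intro mult_left_mono) auto
      finally show ?thesis by simp
    qed
    moreover have "obj t' k x \<le> obj t' k x'" using x'(2) x(1) by blast
    ultimately show ?thesis using x(3) x'(3) by linarith
  qed
  show ?thesis using key[of \<theta> \<theta>'] key[of \<theta>' \<theta>] by (simp add: abs_minus_commute)
qed

lemma V_cont:
  assumes "compact S" "S \<noteq> {}" "S \<subseteq> {0..1}"
  shows "continuous_on T (V S)"
  unfolding continuous_on_iff
proof (intro ballI allI impI)
  fix x e :: real assume "0 < e"
  show "\<exists>d>0. \<forall>x'\<in>T. dist x' x < d \<longrightarrow> dist (V S x') (V S x) < e"
    using V_lip[OF assms] \<open>0 < e\<close> by (intro exI[of _ e]) (auto simp: dist_real_def intro: le_less_trans)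
qed

lemma max_exists: "\<exists>m. m \<in> maximisers \<theta> k"
proof -
  have "continuous_on {0..1} (obj \<theta> k)" by (rule obj_cont_k) simp
  then have "\<exists>x\<in>{0..1}. \<forall>y\<in>{0..1}. obj \<theta> k y \<le> obj \<theta> k x"
    by (intro continuous_attains_sup) auto
  then obtain x where "x \<in> {0..1}" "\<forall>y\<in>{0..1}. obj \<theta> k y \<le> obj \<theta> k x" by blast
  then show ?thesis by (auto simp: maximisers_def)
qed

abbreviation "cc \<equiv> (k-1)/k"

lemma cc_props: "a < cc" "cc < b" "0 < cc" "cc < 1"
  using ac cb a_half b1 by auto

lemma exists_two: "\<exists>\<theta> u w. 0 \<le> \<theta> \<and> maximisers \<theta> k = {u, w} \<and> u < a \<and> b \<le> w"
proof -
  let ?S1 = "{0..cc}" and ?S2 = "{cc..1}"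
  have S1: "compact ?S1" "?S1 \<noteq> {}" "?S1 \<subseteq> {0..1}" using cc_props by auto
  have S2: "compact ?S2" "?S2 \<noteq> {}" "?S2 \<subseteq> {0..1}" using cc_props by auto
  define D where "D = (\<lambda>\<theta>. V ?S2 \<theta> - V ?S1 \<theta>)"
  define \<Theta> where "\<Theta> = 1 / (1 - cc powr k)"
  have ck: "cc powr k < 1" using powr_less_mono2[of k cc 1] cc_props k0' by simp
  have \<Theta>0: "0 < \<Theta>" using ck by (simp add: \<Theta>_def)
  have contD: "continuous_on {0..\<Theta>} D"
    unfolding D_def by (intro continuous_on_diff V_cont S1 S2)
  have D0: "D 0 \<le> 0"
  proof -
    obtain m where m: "m \<in> maximisers 0 k" using max_exists by blast
    have "hf k m = 0" using max_crit[OF _ m] by simp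
    have m01: "0 < m" "m < 1" using max_in01[OF _ m] by auto
    have "Lf m * m powr (1 - k) = 0" using \<open>hf k m = 0\<close> k0' by (simp add: hf_def)
    then have "Lf m = 0" using m01 by simp
    then have "m \<le> cc" using Lf_pos[of m] m01 cc_props a_half ac by (cases "1/2 < m") auto
    obtain w where w: "w \<in> ?S2" "V ?S2 0 = obj 0 k w" using V_attain[OF S2, of 0] by blast
    obtain u where u: "u \<in> ?S1" "\<forall>y\<in>?S1. obj 0 k y \<le> obj 0 k u" "V ?S1 0 = obj 0 k u"
      using V_attain[OF S1, of 0] by blast
    have "obj 0 k w \<le> obj 0 k m" using max_le[OF m] w(1) cc_props by auto
    also have "obj 0 k m \<le> obj 0 k u" using u(2) \<open>m \<le> cc\<close> m01 by auto
    finally show ?thesis using u(3) w(2) by (simp add: D_def)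
  qed
  have D\<Theta>: "0 \<le> D \<Theta>"
  proof -
    obtain u where u: "u \<in> ?S1" "V ?S1 \<Theta> = obj \<Theta> k u" using V_attain[OF S1, of \<Theta>] by blast
    obtain w where w: "w \<in> ?S2" "\<forall>y\<in>?S2. obj \<Theta> k y \<le> obj \<Theta> k w" "V ?S2 \<Theta> = obj \<Theta> k w"
      using V_attain[OF S2, of \<Theta>] by blast
    have "obj \<Theta> k 1 \<le> obj \<Theta> k w" using w(2) cc_props by auto
    moreover have "obj \<Theta> k 1 = \<Theta>" by (simp add: obj_def)
    moreover have "obj \<Theta> k u \<le> \<Theta> * cc powr k + 1/2"
    proof -
      have "u powr k \<le> cc powr k" using u(1) k0' by (intro powr_mono2) auto
      then have "\<Theta> * u powr k \<le> \<Theta> * cc powr k" using \<Theta>0 by simp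
      moreover have "- I_fun u \<le> 1/2" using u(1) cc_props by (intro I_ge) auto
      ultimately show ?thesis by (simp add: obj_def)
    qed
    moreover have "\<Theta> - \<Theta> * cc powr k = 1"
    proof -
      have "\<Theta> * (1 - cc powr k) = 1" unfolding \<Theta>_def using ck by simp
      then show ?thesis by (simp add: right_diff_distrib)
    qed
    ultimately show ?thesis unfolding D_def using u(2) w(3) by linarith
  qed
  obtain th where th: "0 \<le> th" "th \<le> \<Theta>" "D th = 0"
    using IVT'[of D 0 0 \<Theta>, OF D0 D\<Theta> _ contD] \<Theta>0 by auto
  obtain u where u: "u \<in> ?S1" "\<forall>y\<in>?S1. obj th k y \<le> obj th k u" "V ?S1 th = obj th k u"
    using V_attain[OF S1, of th] by blast
  obtain w where w: "w \<in> ?S2" "\<forall>y\<in>?S2. obj th k y \<le> obj th k w" "V ?S2 th = obj th k w"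
    using V_attain[OF S2, of th] by blast
  have eq: "obj th k u = obj th k w" using th(3) u(3) w(3) by (simp add: D_def)
  have allle: "obj th k y \<le> obj th k u" if "0 \<le> y" "y \<le> 1" for y
  proof (cases "y \<le> cc")
    case True then show ?thesis using u(2) that by auto
  next
    case False then show ?thesis using w(2) that eq by auto
  qed
  have uM: "u \<in> maximisers th k" using u(1) cc_props allle by (auto simp: maximisers_def)
  have wM: "w \<in> maximisers th k" using w(1) cc_props allle eq by (auto simp: maximisers_def)
  have ua: "u < a" using max_pieces[OF th(1) uM] u(1) cc_props by auto
  have wb: "b \<le> w" using max_pieces[OF th(1) wM] w(1) cc_props by auto
  have "maximisers th k = {u, w}"
  proof
    show "{u, w} \<subseteq> maximisers th k" using uM wM by auto
    show "maximisers th k \<subseteq> {u, w}"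
    proof
      fix m assume m: "m \<in> maximisers th k"
      show "m \<in> {u, w}"
      proof (cases "m < a")
        case True then show ?thesis using max_uniq_left[OF th(1) m uM] ua by auto
      next
        case False then have "b \<le> m" using max_pieces[OF th(1) m] by auto
        then show ?thesis using max_uniq_right[OF th(1) m wM] wb by auto
      qed
    qed
  qed
  then show ?thesis using th(1) ua wb by blast
qed

lemma card2_shape:
  assumes th: "0 \<le> \<theta>" and c2: "card (maximisers \<theta> k) = 2"
  shows "\<exists>u w. maximisers \<theta> k = {u, w} \<and> u < a \<and> b \<le> w"
proof -
  have "\<exists>x y. maximisers \<theta> k = {x, y} \<and> x \<noteq> y" using c2 by (simp only: card_2_iff)
  then obtain x y where xy: "maximisers \<theta> k = {x, y}" "x \<noteq> y" by blast
  have xM: "x \<in> maximisers \<theta> k" and yM: "y \<in> maximisers \<theta> k" using xy by auto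
  have px: "x < a \<or> b \<le> x" and py: "y < a \<or> b \<le> y" using max_pieces[OF th xM] max_pieces[OF th yM] by auto
  have "\<not> (x < a \<and> y < a)" using max_uniq_left[OF th xM yM] xy(2) by auto
  moreover have "\<not> (b \<le> x \<and> b \<le> y)" using max_uniq_right[OF th xM yM] xy(2) by auto
  ultimately have "(x < a \<and> b \<le> y) \<or> (y < a \<and> b \<le> x)" using px py by auto
  then show ?thesis
  proof (elim disjE)
    assume "x < a \<and> b \<le> y" then show ?thesis using xy(1) by blast
  next
    assume h: "y < a \<and> b \<le> x"
    have "maximisers \<theta> k = {y, x}" using xy(1) by (simp add: insert_commute)
    then show ?thesis using h by blast
  qed
qed

lemma theta_unique:
  assumes th: "0 \<le> \<theta>" "0 \<le> \<theta>'" and c: "card (maximisers \<theta> k) = 2" "card (maximisers \<theta>' k) = 2"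
  shows "\<theta> = \<theta>'"
proof (rule ccontr)
  assume ne: "\<theta> \<noteq> \<theta>'"
  obtain u w where uw: "maximisers \<theta> k = {u, w}" "u < a" "b \<le> w" using card2_shape[OF th(1) c(1)] by blast
  obtain u' w' where uw': "maximisers \<theta>' k = {u', w'}" "u' < a" "b \<le> w'" using card2_shape[OF th(2) c(2)] by blast
  show False
  proof (cases "\<theta> < \<theta>'")
    case True
    have "w < u'" using max_mono[OF th(1) True, of w u'] uw uw' by auto
    then show False using uw uw' ab by simp
  next
    case False
    then have lt: "\<theta>' < \<theta>" using ne by simp
    have "w' < u" using max_mono[OF th(2) lt, of w' u] uw uw' by auto
    then show False using uw uw' ab by simp
  qed
qed

lemma main_struct:
  "\<exists>u w. 0 \<le> theta_hat k \<and> maximisers (theta_hat k) k = {u, w} \<and> 1/2 \<le> u \<and> u < a \<and> b \<le> w \<and> w < 1 \<and>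
     hf k u = theta_hat k \<and> hf k w = theta_hat k \<and> T1 k = u powr k \<and> T2 k = w powr k \<and>
     (\<forall>v\<in>{0..1}. obj (theta_hat k) k v \<le> obj (theta_hat k) k u) \<and>
     (\<forall>v\<in>{0..1}. obj (theta_hat k) k v \<le> obj (theta_hat k) k w)"
proof -
  obtain th u w where A: "0 \<le> th" "maximisers th k = {u, w}" "u < a" "b \<le> w"
    using exists_two by blast
  have uw: "u < w" using A ab by simp
  have card: "card (maximisers th k) = 2" using A(2) uw by simp
  have thk: "theta_hat k = th" unfolding theta_hat_def
  proof (rule the_equality)
    show "0 \<le> th \<and> card (maximisers th k) = 2" using A(1) card by simp
    fix t assume "0 \<le> t \<and> card (maximisers t k) = 2"
    then show "t = th" using theta_unique[of t th] A(1) card by auto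
  qed
  have uM: "u \<in> maximisers th k" and wM: "w \<in> maximisers th k" using A(2) by auto
  have "u1_star th k = u" "u2_star th k = w" unfolding u1_star_def u2_star_def A(2) using uw by auto
  then have T: "T1 k = u powr k" "T2 k = w powr k" by (simp_all add: T1_def T2_def thk)
  have P: "0 \<le> th" "maximisers th k = {u, w}" "u < a" "b \<le> w" using A by auto
  have Q: "1/2 \<le> u" using max_half[OF A(1) uM] .
  have R: "w < 1" using max_in01[OF A(1) wM] by simp
  have S: "hf k u = th" "hf k w = th" using max_crit[OF A(1) uM] max_crit[OF A(1) wM] by auto
  have U: "\<forall>v\<in>{0..1}. obj th k v \<le> obj th k u" "\<forall>v\<in>{0..1}. obj th k v \<le> obj th k w"
    using max_le[OF uM] max_le[OF wM] by auto
  show ?thesis unfolding thk using P Q R S T U by blast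
qed

end

section \<open>Comparison machinery\<close>

lemma struct_k:
  assumes "k0 < k"
  shows "\<exists>a b u w. 2 < k \<and> 1/2 < a \<and> a < (k-1)/k \<and> (k-1)/k < b \<and> b < 1 \<and> phi k a = 0 \<and>
     (\<forall>x. 0 < x \<and> x < a \<longrightarrow> 0 < phi k x) \<and>
     0 \<le> theta_hat k \<and> maximisers (theta_hat k) k = {u, w} \<and> 1/2 \<le> u \<and> u < a \<and> b \<le> w \<and> w < 1 \<and>
     hf k u = theta_hat k \<and> hf k w = theta_hat k \<and> T1 k = u powr k \<and> T2 k = w powr k \<and>
     (\<forall>v\<in>{0..1}. obj (theta_hat k) k v \<le> obj (theta_hat k) k u) \<and>
     (\<forall>v\<in>{0..1}. obj (theta_hat k) k v \<le> obj (theta_hat k) k w)"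
proof -
  have k2: "2 < k" using k0_props(1) assms by simp
  have neg: "k - (k-1) * ln (k-1) < 0" using k0_props(2) assms by simp
  obtain a b where AB: "1/2 < a" "a < (k-1)/k" "(k-1)/k < b" "b < 1" "phi k a = 0" "phi k b = 0"
     "\<forall>x. 0 < x \<and> x < a \<longrightarrow> 0 < phi k x" "\<forall>x. a < x \<and> x < b \<longrightarrow> phi k x < 0"
     "\<forall>x. b < x \<and> x < 1 \<longrightarrow> 0 < phi k x"
    using phi_roots[OF k2 neg] by blast
  interpret kfix k a b
    by unfold_locales (use k2 AB in auto)
  obtain u w where uw: "0 \<le> theta_hat k" "maximisers (theta_hat k) k = {u, w}" "1/2 \<le> u" "u < a" "b \<le> w" "w < 1"
     "hf k u = theta_hat k" "hf k w = theta_hat k" "T1 k = u powr k" "T2 k = w powr k"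
     "\<forall>v\<in>{0..1}. obj (theta_hat k) k v \<le> obj (theta_hat k) k u"
     "\<forall>v\<in>{0..1}. obj (theta_hat k) k v \<le> obj (theta_hat k) k w"
    using main_struct by blast
  show ?thesis
    by (rule exI[of _ a], rule exI[of _ b], rule exI[of _ u], rule exI[of _ w]) (use k2 AB uw in auto)
qed

lemma ln_strict: "0 < (y::real) \<Longrightarrow> y \<noteq> 1 \<Longrightarrow> ln y < y - 1"
  using ln_le_minus_one[of y] ln_eq_minus_one[of y] by fastforce

lemma cpow_mono:
  fixes k k' :: real
  assumes "2 < k" "k < k'"
  shows "((k-1)/k) powr k \<le> ((k'-1)/k') powr k'"
proof -
  define g where "g = (\<lambda>x::real. x * (ln (x-1) - ln x))"
  have gd: "(g has_real_derivative (ln (x-1) - ln x) + 1/(x-1)) (at x)" if "2 < x" for x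
  proof -
    have "(g has_real_derivative (1 * (ln (x-1) - ln x) + x * (1/(x-1) - 1/x))) (at x)"
      unfolding g_def using that by (auto intro!: derivative_eq_intros)
    moreover have "x * (1/(x-1) - 1/x) = 1/(x-1)" using that by (simp add: field_simps)
    ultimately show ?thesis by simp
  qed
  have gpos: "0 < (ln (x-1) - ln x) + 1/(x-1)" if "2 < x" for x :: real
  proof -
    have "ln (x/(x-1)) < x/(x-1) - 1" using that by (intro ln_strict) auto
    moreover have "ln (x/(x-1)) = ln x - ln (x-1)" using that by (simp add: ln_div)
    moreover have "x/(x-1) - 1 = 1/(x-1)" using that by (simp add: field_simps)
    ultimately show ?thesis by simp
  qed
  have "g k < g k'"
  proof (rule DERIV_pos_imp_increasing_open[OF assms(2)])
    show "continuous_on {k..k'} g" by (rule deriv_cont[OF gd]) (use assms in auto)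
    fix x assume "k < x" "x < k'"
    then have x2: "2 < x" using assms by simp
    show "\<exists>y. (g has_real_derivative y) (at x) \<and> 0 < y" using gd[OF x2] gpos[OF x2] by blast
  qed
  moreover have pe: "((x-1)/x) powr x = exp (g x)" if "2 < x" for x
  proof -
    have "(x-1)/x \<noteq> 0" using that by simp
    then have "((x-1)/x) powr x = exp (x * ln ((x-1)/x))" by (simp add: powr_def)
    moreover have "ln ((x-1)/x) = ln (x-1) - ln x" using that by (intro ln_divide_pos) auto
    ultimately show ?thesis by (simp add: g_def)
  qed
  ultimately show ?thesis using pe[of k] pe[of k'] assms by simp
qed

definition psi :: "real \<Rightarrow> real" where "psi u = u * Lf u / 2"
definition Af :: "real \<Rightarrow> real" where "Af u = Lf u + 1/(1-u)"
definition Ob :: "real \<Rightarrow> real \<Rightarrow> real \<Rightarrow> real" where "Ob k \<theta> T = \<theta> * T - I_fun (T powr (1/k))"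
definition Rf :: "real \<Rightarrow> real \<Rightarrow> real" where "Rf \<sigma> T = psi (T powr \<sigma>) / T"
definition Nf :: "real \<Rightarrow> real \<Rightarrow> real" where
  "Nf \<sigma> T = (T powr \<sigma>) * (\<sigma> * Af (T powr \<sigma>) - Lf (T powr \<sigma>))"
definition Mf :: "real \<Rightarrow> real \<Rightarrow> real" where
  "Mf lT u = (1/lT) * (u * ln u * Af u) - u * Lf u"

lemma Ob_obj: "0 < k \<Longrightarrow> 0 \<le> T \<Longrightarrow> Ob k \<theta> T = obj \<theta> k (T powr (1/k))"
  by (simp add: Ob_def obj_def powr_powr powr_one)

lemma obj_Ob: "0 < k \<Longrightarrow> 0 \<le> u \<Longrightarrow> obj \<theta> k u = Ob k \<theta> (u powr k)"
  by (simp add: Ob_def obj_def powr_powr powr_one)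

lemma powr_pos_lt1: "0 < (T::real) \<Longrightarrow> T < 1 \<Longrightarrow> 0 < (s::real) \<Longrightarrow> 0 < T powr s \<and> T powr s < 1"
  using powr_less_mono2[of s T 1] by simp

lemma Ob_deriv:
  assumes k: "0 < k" and T: "0 < T" "T < 1"
  shows "(Ob k \<theta> has_real_derivative \<theta> - psi (T powr (1/k)) / (k*T)) (at T)"
proof -
  let ?u = "T powr (1/k)"
  have u: "0 < ?u" "?u < 1" using powr_pos_lt1[OF T, of "1/k"] k by auto
  have d1: "((\<lambda>T. T powr (1/k)) has_real_derivative (1/k) * T powr (1/k - 1)) (at T)"
    by (rule has_real_derivative_powr) (use T in auto)
  have d2: "((\<lambda>T. I_fun (T powr (1/k))) has_real_derivative Lf ?u / 2 * ((1/k) * T powr (1/k - 1))) (at T)"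
    by (rule DERIV_chain2[OF I_deriv[OF u] d1])
  have "T powr (1/k - 1) = ?u / T" using T by (simp add: powr_diff)
  then have eq: "Lf ?u / 2 * ((1/k) * T powr (1/k - 1)) = psi ?u / (k*T)"
    by (simp add: psi_def)
  have "((\<lambda>T. \<theta> * T - I_fun (T powr (1/k))) has_real_derivative \<theta> * 1 - psi ?u / (k*T)) (at T)"
    by (intro DERIV_diff DERIV_cmult DERIV_ident) (use d2 eq in simp)
  then show ?thesis by (simp add: Ob_def[abs_def])
qed

lemma psi_deriv: "0 < u \<Longrightarrow> u < 1 \<Longrightarrow> (psi has_real_derivative Af u / 2) (at u)"
proof -
  assume u: "0 < u" "u < 1"
  have "((\<lambda>u. u * Lf u / 2) has_real_derivative (1 * Lf u + (1/u + 1/(1-u)) * u) / 2) (at u)"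
    by (intro DERIV_cdivide DERIV_mult DERIV_ident Lf_deriv u)
  moreover have "(1/u + 1/(1-u)) * u = 1/(1-u)" using u by (simp add: field_simps)
  ultimately show ?thesis by (simp add: psi_def[abs_def] Af_def)
qed

lemma Rf_deriv:
  assumes s: "0 < \<sigma>" and T: "0 < T" "T < 1"
  shows "(Rf \<sigma> has_real_derivative Nf \<sigma> T / (2 * T^2)) (at T)"
proof -
  let ?u = "T powr \<sigma>"
  have u: "0 < ?u" "?u < 1" using powr_pos_lt1[OF T s] by auto
  have d1: "((\<lambda>T. T powr \<sigma>) has_real_derivative \<sigma> * T powr (\<sigma> - 1)) (at T)"
    by (rule has_real_derivative_powr) (use T in auto)
  have d2: "((\<lambda>T. psi (T powr \<sigma>)) has_real_derivative Af ?u / 2 * (\<sigma> * T powr (\<sigma> - 1))) (at T)"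
    by (rule DERIV_chain2[OF psi_deriv[OF u] d1])
  have d3: "((\<lambda>T. psi (T powr \<sigma>) / T) has_real_derivative
      (Af ?u / 2 * (\<sigma> * T powr (\<sigma> - 1)) * T - psi ?u * 1) / (T * T)) (at T)"
    by (rule DERIV_divide[OF d2 DERIV_ident]) (use T in simp)
  have p: "T powr (\<sigma> - 1) * T = ?u" using T by (simp add: powr_diff)
  have eqN: "Af ?u / 2 * (\<sigma> * T powr (\<sigma> - 1)) * T - psi ?u * 1 = Nf \<sigma> T / 2"
  proof -
    have "Af ?u / 2 * (\<sigma> * T powr (\<sigma> - 1)) * T = Af ?u / 2 * \<sigma> * (T powr (\<sigma> - 1) * T)"
      by (simp add: algebra_simps)
    also have "\<dots> = Af ?u / 2 * \<sigma> * ?u" using p by simp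
    finally show ?thesis by (simp add: Nf_def psi_def algebra_simps)
  qed
  have eqD: "(Af ?u / 2 * (\<sigma> * T powr (\<sigma> - 1)) * T - psi ?u * 1) / (T * T) = Nf \<sigma> T / (2 * T^2)"
    unfolding eqN by (simp add: power2_eq_square)
  show ?thesis unfolding Rf_def[abs_def] using d3[unfolded eqD] .
qed

lemma aux1: "(e::real) > 0 \<Longrightarrow> 1/e + u/e^2 = (e + u)/e^2"
  by (simp add: field_simps power2_eq_square)

lemma Mf_deriv:
  assumes u: "0 < u" "u < 1" and l: "lT \<noteq> 0"
  shows "(Mf lT has_real_derivative (1/lT) * ((ln u + 1) * Af u + ln u / (1-u)^2) - Af u) (at u)"
proof -
  have dA: "(Af has_real_derivative (1/u + 1/(1-u)) + 1/(1-u)^2) (at u)"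
  proof -
    have d1: "((\<lambda>u. 1/(1-u)) has_real_derivative 1/(1-u)^2) (at u)"
      using u by (auto intro!: derivative_eq_intros simp: power2_eq_square divide_simps)
    show ?thesis unfolding Af_def[abs_def] by (intro DERIV_add Lf_deriv d1 u)
  qed
  have dl: "((\<lambda>u. u * ln u) has_real_derivative 1 * ln u + 1/u * u) (at u)"
    by (intro DERIV_mult DERIV_ident DERIV_ln_divide u)
  have d1: "((\<lambda>u. u * ln u * Af u) has_real_derivative
      (1 * ln u + 1/u * u) * Af u + ((1/u + 1/(1-u)) + 1/(1-u)^2) * (u * ln u)) (at u)"
    by (rule DERIV_mult[OF dl dA])
  have d2: "((\<lambda>u. u * Lf u) has_real_derivative 1 * Lf u + (1/u + 1/(1-u)) * u) (at u)"
    by (intro DERIV_mult DERIV_ident Lf_deriv u)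
  have d: "(Mf lT has_real_derivative (1/lT) * ((1 * ln u + 1/u * u) * Af u + ((1/u + 1/(1-u)) + 1/(1-u)^2) * (u * ln u))
       - (1 * Lf u + (1/u + 1/(1-u)) * u)) (at u)"
    unfolding Mf_def[abs_def] by (intro DERIV_diff DERIV_cmult d1 d2)
  have e2: "(1/u + 1/(1-u)) * u = 1/(1-u)" using u by (simp add: field_simps)
  have e1: "((1/u + 1/(1-u)) + 1/(1-u)^2) * u = 1/(1-u)^2"
  proof -
    have "((1/u + 1/(1-u)) + 1/(1-u)^2) * u = 1/(1-u) + u/(1-u)^2" using e2 by (simp add: distrib_right)
    also have "\<dots> = ((1-u) + u)/(1-u)^2" using aux1[of "1-u" u] u by simp
    finally show ?thesis by simp
  qed
  have "(1 * ln u + 1/u * u) * Af u + ((1/u + 1/(1-u)) + 1/(1-u)^2) * (u * ln u)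
      = (ln u + 1) * Af u + ln u / (1-u)^2"
  proof -
    have "((1/u + 1/(1-u)) + 1/(1-u)^2) * (u * ln u) = (((1/u + 1/(1-u)) + 1/(1-u)^2) * u) * ln u"
      by (simp add: algebra_simps)
    then show ?thesis using u e1 by simp
  qed
  moreover have "1 * Lf u + (1/u + 1/(1-u)) * u = Af u" using e2 by (simp add: Af_def)
  ultimately show ?thesis using d by simp
qed

lemma Mf_alg:
  fixes A q m l :: real
  assumes "m \<noteq> 0"
  shows "(1/(-m)) * ((-l + 1) * A + (-q)) - A = - (((1 - l + m) * A - q) / m)"
  using assms by (simp add: field_simps)

lemma Mf_neg:
  assumes u: "1/2 \<le> u" "u < 1" and l: "lT < 0" "lT \<le> 2 * ln u"
  shows "(1/lT) * ((ln u + 1) * Af u + ln u / (1-u)^2) - Af u < 0"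
proof -
  define l where "l = - ln u"
  define m where "m = - lT"
  define e where "e = 1 - u"
  have u0: "0 < u" using u by simp
  have e0: "0 < e" using u by (simp add: e_def)
  have l0: "0 < l" using u u0 by (simp add: l_def)
  have m0: "0 < m" using l by (simp add: m_def)
  have ml: "2 * l \<le> m" using l by (simp add: l_def m_def)
  have Lf0: "0 \<le> Lf u"
  proof -
    have "1 - u \<le> u" using u by simp
    then have "ln (1-u) \<le> ln u" using u u0 by simp
    then show ?thesis by (simp add: Lf_def)
  qed
  have A_eq: "Af u = Lf u + 1/e" by (simp add: Af_def e_def)
  have "0 < 1/e" using e0 by simp
  then have A0: "0 < Af u" using Lf0 A_eq by linarith
  have lu: "l * u < e"
  proof -
    have "ln (1/u) < 1/u - 1" using u0 u by (intro ln_strict) auto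
    then have "l < 1/u - 1" using u0 by (simp add: l_def ln_div)
    then have "l * u < (1/u - 1) * u" using u0 by (simp add: mult_strict_right_mono)
    also have "(1/u - 1) * u = e" using u0 by (simp add: e_def field_simps)
    finally show ?thesis .
  qed
  define q where "q = l / e^2"
  have K: "0 < (1 - l + m) * Af u - q"
  proof -
    have "(1 + l) * Af u \<le> (1 - l + m) * Af u" using ml A0 by (intro mult_right_mono) auto
    moreover have "(1 + l) * Af u - q = (1 + l) * Lf u + ((1 + l) * e - l) / e^2"
      using e0 by (simp add: A_eq q_def field_simps power2_eq_square)
    moreover have "0 \<le> (1 + l) * Lf u" using Lf0 l0 by simp
    moreover have "0 < ((1 + l) * e - l) / e^2"
    proof -
      have "(1 + l) * e - l = e - l * u" by (simp add: e_def algebra_simps)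
      then show ?thesis using lu e0 by simp
    qed
    ultimately show ?thesis by linarith
  qed
  have "(1/lT) * ((ln u + 1) * Af u + ln u / (1-u)^2) - Af u
      = (1/(-m)) * ((-l + 1) * Af u + (-q)) - Af u"
    by (simp add: m_def l_def q_def e_def)
  also have "\<dots> = - (((1 - l + m) * Af u - q) / m)" using m0 by (intro Mf_alg) simp
  finally show ?thesis using K m0 by simp
qed

lemma Nf_Mf:
  assumes T: "0 < T" "T < 1" and s: "0 < \<sigma>"
  shows "Nf \<sigma> T = Mf (ln T) (T powr \<sigma>)"
proof -
  have "ln T \<noteq> 0" using T by simp
  moreover have "ln (T powr \<sigma>) = \<sigma> * ln T" using T by (simp add: ln_powr)
  ultimately show ?thesis by (simp add: Nf_def Mf_def field_simps)
qed

lemma Nf_strict: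
  assumes T: "0 < T" "T < 1" and k: "2 \<le> k" "k < k'" and h: "1/2 \<le> T powr (1/k)"
  shows "Nf (1/k') T < Nf (1/k) T"
proof -
  let ?u = "T powr (1/k)" and ?u' = "T powr (1/k')" and ?l = "ln T"
  have k0: "0 < k" "0 < k'" using k by auto
  have uu': "?u < ?u'" using T k0 k by (intro powr_less_mono') (auto simp: divide_strict_left_mono)
  have u'1: "?u' < 1" using powr_pos_lt1[OF T, of "1/k'"] k0 by simp
  have u0: "0 < ?u" using T by simp
  have l0: "?l < 0" using T by simp
  have lnu: "ln ?u = ?l / k" using T by (simp add: ln_powr)
  have "Mf ?l ?u' < Mf ?l ?u"
  proof (rule DERIV_neg_imp_decreasing_open[OF uu'])
    show "continuous_on {?u..?u'} (Mf ?l)"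
    proof (rule deriv_cont)
      fix x assume "?u \<le> x" "x \<le> ?u'"
      then have "0 < x" "x < 1" using u0 u'1 by linarith+
      then show "(Mf ?l has_real_derivative (1/?l) * ((ln x + 1) * Af x + ln x / (1-x)^2) - Af x) (at x)"
        using Mf_deriv l0 by simp
    qed
    fix \<xi> assume \<xi>: "?u < \<xi>" "\<xi> < ?u'"
    have \<xi>0: "0 < \<xi>" "\<xi> < 1" using \<xi> u0 u'1 by linarith+
    have "ln ?u < ln \<xi>" using ln_less_cancel_iff[OF u0 \<xi>0(1)] \<xi>(1) by blast
    moreover have "?l \<le> 2 * (?l / k)"
    proof -
      have "?l * k \<le> ?l * 2" using l0 k by (intro mult_left_mono_neg) auto
      then show ?thesis using k0 by (simp add: field_simps)
    qed
    ultimately have "?l \<le> 2 * ln \<xi>" using lnu by simp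
    then have "(1/?l) * ((ln \<xi> + 1) * Af \<xi> + ln \<xi> / (1-\<xi>)^2) - Af \<xi> < 0"
      using Mf_neg[of \<xi> ?l] \<xi>0 h \<xi> l0 by simp
    then show "\<exists>d. (Mf ?l has_real_derivative d) (at \<xi>) \<and> d < 0"
      using Mf_deriv[of \<xi> ?l] \<xi>0 l0 by auto
  qed
  then show ?thesis using Nf_Mf[OF T, of "1/k"] Nf_Mf[OF T, of "1/k'"] k0 by simp
qed

lemma Rf_crit:
  assumes u: "0 < u" "u < 1" and k: "0 < k"
  shows "Rf (1/k) (u powr k) = k * hf k u"
proof -
  have p: "(u powr k) powr (1/k) = u" using u k by (simp add: powr_powr)
  have q: "u powr (1 - k) = u / u powr k" using u by (simp add: powr_diff)
  show ?thesis unfolding Rf_def p hf_def q psi_def using k by (simp add: ac_simps)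
qed

lemma concave_contra:
  fixes E E' :: "real \<Rightarrow> real"
  assumes ab: "a < b"
    and der: "\<And>x. a \<le> x \<Longrightarrow> x \<le> b \<Longrightarrow> (E has_real_derivative E' x) (at x)"
    and dec: "\<And>x y. a \<le> x \<Longrightarrow> x < y \<Longrightarrow> y \<le> b \<Longrightarrow> E' y < E' x"
    and Ea: "0 \<le> E a" and Eb: "0 \<le> E b"
    and x: "a \<le> x" "x \<le> b" "E x \<le> 0"
    and xa: "x = a \<Longrightarrow> E' a = 0" and xb: "x = b \<Longrightarrow> E' b = 0"
  shows False
proof -
  consider "x = a" | "x = b" | "a < x \<and> x < b" using x by linarith
  then show False
  proof cases
    case 1
    obtain z where z: "a < z" "z < b" "E b - E a = (b - a) * E' z" using MVT2[OF ab der] by blast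
    have "E' z < 0" using dec[of a z] z xa[OF 1] by simp
    then have "(b - a) * E' z < 0" using ab by (simp add: mult_pos_neg)
    then show False using z Ea Eb x 1 by simp
  next
    case 2
    obtain z where z: "a < z" "z < b" "E b - E a = (b - a) * E' z" using MVT2[OF ab der] by blast
    have "0 < E' z" using dec[of z b] z xb[OF 2] by simp
    then have "0 < (b - a) * E' z" using ab by simp
    then show False using z Ea Eb x 2 by simp
  next
    case 3
    obtain z1 where z1: "a < z1" "z1 < x" "E x - E a = (x - a) * E' z1"
      using MVT2[of a x E E'] der 3 by auto
    obtain z2 where z2: "x < z2" "z2 < b" "E b - E x = (b - x) * E' z2"
      using MVT2[of x b E E'] der 3 by auto
    have "E' z1 \<le> 0"
    proof (rule ccontr)
      assume "\<not> E' z1 \<le> 0"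
      then have "0 < (x - a) * E' z1" using 3 by simp
      then show False using z1 Ea x by simp
    qed
    moreover have "E' z2 < E' z1" using dec[of z1 z2] z1 z2 3 by simp
    ultimately have "(b - x) * E' z2 < 0" using 3 by (simp add: mult_pos_neg)
    then show False using z2 Eb x by simp
  qed
qed

lemma obj_le_of_max:
  assumes "\<forall>v\<in>{0..1}. obj th k v \<le> obj th k u" "0 < k" "0 \<le> T" "T \<le> 1"
  shows "Ob k th T \<le> obj th k u"
proof -
  have "0 \<le> T powr (1/k)" "T powr (1/k) \<le> 1" using assms by (auto intro: powr_le1)
  then show ?thesis using assms Ob_obj[of k T th] by auto
qed

lemma compare:
  assumes kk: "k0 < k" "k < k'"
  shows "T1 k' < T1 k \<and> T2 k < T2 k'"
proof -
  have k'0: "k0 < k'" using kk by simp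
  obtain a b u1 u2 where A: "2 < k" "1/2 < a" "a < (k-1)/k" "(k-1)/k < b" "b < 1" "phi k a = 0"
     "\<forall>x. 0 < x \<and> x < a \<longrightarrow> 0 < phi k x"
     "0 \<le> theta_hat k" "maximisers (theta_hat k) k = {u1, u2}" "1/2 \<le> u1" "u1 < a" "b \<le> u2" "u2 < 1"
     "hf k u1 = theta_hat k" "hf k u2 = theta_hat k" "T1 k = u1 powr k" "T2 k = u2 powr k"
     "\<forall>v\<in>{0..1}. obj (theta_hat k) k v \<le> obj (theta_hat k) k u1"
     "\<forall>v\<in>{0..1}. obj (theta_hat k) k v \<le> obj (theta_hat k) k u2"
    using struct_k[OF kk(1)] by blast
  obtain a' b' v1 v2 where B: "2 < k'" "1/2 < a'" "a' < (k'-1)/k'" "(k'-1)/k' < b'" "b' < 1" "phi k' a' = 0"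
     "\<forall>x. 0 < x \<and> x < a' \<longrightarrow> 0 < phi k' x"
     "0 \<le> theta_hat k'" "maximisers (theta_hat k') k' = {v1, v2}" "1/2 \<le> v1" "v1 < a'" "b' \<le> v2" "v2 < 1"
     "hf k' v1 = theta_hat k'" "hf k' v2 = theta_hat k'" "T1 k' = v1 powr k'" "T2 k' = v2 powr k'"
     "\<forall>v\<in>{0..1}. obj (theta_hat k') k' v \<le> obj (theta_hat k') k' v1"
     "\<forall>v\<in>{0..1}. obj (theta_hat k') k' v \<le> obj (theta_hat k') k' v2"
    using struct_k[OF k'0] by blast
  define th where "th = theta_hat k"
  define th' where "th' = theta_hat k'"
  define c where "c = (k-1)/k"
  define c' where "c' = (k'-1)/k'"
  define t1 where "t1 = u1 powr k"
  define t2 where "t2 = u2 powr k"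
  define s1 where "s1 = v1 powr k'"
  define s2 where "s2 = v2 powr k'"
  have k0': "0 < k" "0 < k'" using A(1) B(1) by auto
  have u1p: "0 < u1" "u1 < 1" using A by auto
  have u2p: "0 < u2" "u2 < 1" using A by auto
  have v1p: "0 < v1" "v1 < 1" using B by auto
  have v2p: "0 < v2" "v2 < 1" using B by auto
  have u12: "u1 < u2" using A by simp
  have t12: "t1 < t2" unfolding t1_def t2_def using powr_less_mono2[of k u1 u2] k0' u1p u12 by simp
  have t1p: "0 < t1" using u1p by (simp add: t1_def)
  have t21: "t2 < 1" using powr_pos_lt1[OF u2p k0'(1)] by (simp add: t2_def)
  have s1p: "0 < s1" "s1 < 1" using powr_pos_lt1[OF v1p k0'(2)] by (simp_all add: s1_def)
  have s2p: "0 < s2" "s2 < 1" using powr_pos_lt1[OF v2p k0'(2)] by (simp_all add: s2_def)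
  define m where "m = obj th k u1"
  define m' where "m' = obj th' k' v1"
  have m2: "obj th k u2 = m"
  proof -
    have "obj th k u2 \<le> obj th k u1" using A(18) u2p unfolding th_def by simp
    moreover have "obj th k u1 \<le> obj th k u2" using A(19) u1p unfolding th_def by simp
    ultimately show ?thesis by (simp add: m_def)
  qed
  have m2': "obj th' k' v2 = m'"
  proof -
    have "obj th' k' v2 \<le> obj th' k' v1" using B(18) v2p unfolding th'_def by simp
    moreover have "obj th' k' v1 \<le> obj th' k' v2" using B(19) v1p unfolding th'_def by simp
    ultimately show ?thesis by (simp add: m'_def)
  qed
  define P where "P = (\<lambda>T. m - Ob k th T)"
  define P' where "P' = (\<lambda>T. m' - Ob k' th' T)"
  have Pnn: "0 \<le> P T" if "0 \<le> T" "T \<le> 1" for T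
    using obj_le_of_max[OF A(18)[folded th_def] k0'(1) that] by (simp add: P_def m_def)
  have P'nn: "0 \<le> P' T" if "0 \<le> T" "T \<le> 1" for T
    using obj_le_of_max[OF B(18)[folded th'_def] k0'(2) that] by (simp add: P'_def m'_def)
  have Pt1: "P t1 = 0" using obj_Ob[of k u1 th] k0' u1p by (simp add: P_def m_def t1_def)
  have Pt2: "P t2 = 0" using obj_Ob[of k u2 th] k0' u2p m2 by (simp add: P_def t2_def)
  have P's1: "P' s1 = 0" using obj_Ob[of k' v1 th'] k0' v1p by (simp add: P'_def m'_def s1_def)
  have P's2: "P' s2 = 0" using obj_Ob[of k' v2 th'] k0' v2p m2' by (simp add: P'_def s2_def)
  define E where "E = (\<lambda>T. k' * P' T - k * P T)"
  define E' where "E' = (\<lambda>T. Rf (1/k') T - Rf (1/k) T - k' * th' + k * th)"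
  have Ederiv: "(E has_real_derivative E' T) (at T)" if "0 < T" "T < 1" for T
  proof -
    have d: "(E has_real_derivative k' * (0 - (th' - psi (T powr (1/k')) / (k'*T)))
                - k * (0 - (th - psi (T powr (1/k)) / (k*T)))) (at T)"
      unfolding E_def P_def P'_def
      by (intro DERIV_diff DERIV_cmult DERIV_const Ob_deriv k0' that)
    have "k' * (0 - (th' - psi (T powr (1/k')) / (k'*T))) - k * (0 - (th - psi (T powr (1/k)) / (k*T)))
        = E' T" using k0' that by (simp add: E'_def Rf_def field_simps)
    then show ?thesis using d by simp
  qed
  have E'dec: "E' y < E' x" if "t1 \<le> x" "x < y" "y \<le> t2" for x y
  proof -
    have "(\<lambda>T. Rf (1/k') T - Rf (1/k) T) y < (\<lambda>T. Rf (1/k') T - Rf (1/k) T) x"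
    proof (rule DERIV_neg_imp_decreasing_open[OF \<open>x < y\<close>])
      have der: "((\<lambda>T. Rf (1/k') T - Rf (1/k) T) has_real_derivative
          Nf (1/k') T / (2*T^2) - Nf (1/k) T / (2*T^2)) (at T)" if "0 < T" "T < 1" for T
        by (intro DERIV_diff Rf_deriv that) (use k0' in auto)
      show "continuous_on {x..y} (\<lambda>T. Rf (1/k') T - Rf (1/k) T)"
        by (rule deriv_cont[OF der]) (use that t1p t21 in auto)
      fix \<xi> assume \<xi>: "x < \<xi>" "\<xi> < y"
      have \<xi>0: "0 < \<xi>" "\<xi> < 1" using \<xi> that t1p t21 by linarith+
      have "u1 \<le> \<xi> powr (1/k)"
      proof -
        have "t1 powr (1/k) \<le> \<xi> powr (1/k)" using \<xi> that t1p k0' by (intro powr_mono2) auto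
        moreover have "t1 powr (1/k) = u1" using u1p k0' by (simp add: t1_def powr_powr)
        ultimately show ?thesis by simp
      qed
      then have h: "1/2 \<le> \<xi> powr (1/k)" using A(10) by simp
      have "Nf (1/k') \<xi> < Nf (1/k) \<xi>" using Nf_strict[OF \<xi>0 _ kk(2) h] A(1) by simp
      then have "Nf (1/k') \<xi> / (2*\<xi>^2) - Nf (1/k) \<xi> / (2*\<xi>^2) < 0" using \<xi>0
        by (simp add: divide_strict_right_mono)
      then show "\<exists>d. ((\<lambda>T. Rf (1/k') T - Rf (1/k) T) has_real_derivative d) (at \<xi>) \<and> d < 0"
        using der[OF \<xi>0] by blast
    qed
    then show ?thesis by (simp add: E'_def)
  qed
  have Rt1: "Rf (1/k) t1 = k * th" using Rf_crit[OF u1p k0'(1)] A(14) by (simp add: t1_def th_def)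
  have Rt2: "Rf (1/k) t2 = k * th" using Rf_crit[OF u2p k0'(1)] A(15) by (simp add: t2_def th_def)
  have Rs1: "Rf (1/k') s1 = k' * th'" using Rf_crit[OF v1p k0'(2)] B(14) by (simp add: s1_def th'_def)
  have Rs2: "Rf (1/k') s2 = k' * th'" using Rf_crit[OF v2p k0'(2)] B(15) by (simp add: s2_def th'_def)
  have Eder_on: "\<And>x. t1 \<le> x \<Longrightarrow> x \<le> t2 \<Longrightarrow> (E has_real_derivative E' x) (at x)"
    using Ederiv t1p t21 by simp
  have Et1: "0 \<le> E t1" using P'nn[of t1] t1p t12 t21 Pt1 k0' by (simp add: E_def)
  have Et2: "0 \<le> E t2" using P'nn[of t2] t1p t12 t21 Pt2 k0' by (simp add: E_def)
  have a'c: "a' < c"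
  proof -
    have "1/2 < c" "c < 1" using A(2,3,4,5) unfolding c_def by linarith+
    then have Lc: "0 < Lf c" using Lf_pos[of c] by simp
    have "phi k' c = phi k c - (k' - k) * Lf c" by (simp add: phi_def algebra_simps)
    moreover have "phi k c < 0" using phi_c[of k] k0_props(2)[OF kk(1)] A(1) by (simp add: c_def)
    moreover have "0 < (k' - k) * Lf c" using Lc kk by simp
    ultimately have pc: "phi k' c < 0" by simp
    show ?thesis
    proof (rule ccontr)
      assume "\<not> a' < c"
      then have "c < a' \<or> c = a'" by auto
      moreover have "0 < c" using A(2,3) by (simp add: c_def)
      ultimately show False using B(6,7) pc by auto
    qed
  qed
  have part1: "s1 < t1"
  proof (rule ccontr)
    assume "\<not> s1 < t1"
    then have ts: "t1 \<le> s1" by simp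
    have "s1 \<le> v1 powr k" unfolding s1_def using v1p kk by (intro powr_mono') auto
    also have "v1 powr k < u2 powr k"
    proof -
      have "v1 < u2" using B(11) a'c A(4,12) by (simp add: c_def)
      then show ?thesis using powr_less_mono2[of k v1 u2] k0' v1p by simp
    qed
    finally have st2: "s1 < t2" by (simp add: t2_def)
    show False
    proof (rule concave_contra[OF t12 Eder_on E'dec Et1 Et2 ts])
      show "s1 \<le> t2" using st2 by simp
      show "E s1 \<le> 0" using Pnn[of s1] s1p P's1 k0' by (simp add: E_def)
      show "E' t1 = 0" if "s1 = t1" using that Rt1 Rs1 by (simp add: E'_def)
      show "E' t2 = 0" if "s1 = t2" using that st2 by simp
    qed
  qed
  have part2: "t2 < s2"
  proof (rule ccontr)
    assume "\<not> t2 < s2"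
    then have st: "s2 \<le> t2" by simp
    have "t1 < c powr k"
      unfolding t1_def using powr_less_mono2[of k u1 c] k0' u1p A(11,3) by (simp add: c_def)
    also have "c powr k \<le> c' powr k'" using cpow_mono[OF A(1) kk(2)] by (simp add: c_def c'_def)
    also have "c' powr k' < s2"
    proof -
      have "0 \<le> c'" using B(1) by (simp add: c'_def)
      moreover have "c' < v2" using B(4,12) by (simp add: c'_def)
      ultimately show ?thesis unfolding s2_def using powr_less_mono2[of k' c' v2] k0' by simp
    qed
    finally have ts2: "t1 < s2" .
    show False
    proof (rule concave_contra[OF t12 Eder_on E'dec Et1 Et2 _ st])
      show "t1 \<le> s2" using ts2 by simp
      show "E s2 \<le> 0" using Pnn[of s2] s2p P's2 k0' by (simp add: E_def)
      show "E' t1 = 0" if "s2 = t1" using that ts2 by simp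
      show "E' t2 = 0" if "s2 = t2" using that Rt2 Rs2 by (simp add: E'_def)
    qed
  qed
  show ?thesis using part1 part2 A(16,17) B(16,17) by (simp add: t1_def t2_def s1_def s2_def)
qed

theorem lemma3p2:
  shows "(\<forall>k k'. k0 < k \<and> k < k' \<longrightarrow> T1 k' < T1 k) \<and>
         (\<forall>k k'. k0 < k \<and> k < k' \<longrightarrow> T2 k < T2 k')"
  using compare by blast

end
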